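(* Let $\mathcal G$ be a class of measurable functions $g:\mathcal Z\to[0,1]$. Fix constants $c>c_2>0$ and $h\in(0,1]$, let $m\ge1$ and $t\ge\frac{(1+c_2)(1+c_2h^2)}{mc_2h^2}$, and put $c'=\frac{c+c_2}{2}$, $c''=\frac{c-c_2}{2}$. Let $S=(z_1,\dots,z_m)\sim\mathcal D^m$ and let $\epsilon_1,\dots,\epsilon_m$ be i.i.d. Rademacher random variables independent of $S$. Then $$\frac14\,\mathbb P_S\Big(\sup_{g\in\mathcal G}\big[\mathcal L_{\mathcal D}(g)-(1+c)\hat{\mathcal L}_S(g)+c(1-h^2)\hat{\mathcal L}_S(g^2)\big]\ge t\Big)$$ $$\le\mathbb P_{S,\epsilon}\Big(\sup_{g\in\mathcal G}\Big[\frac1m\sum_{i=1}^m\epsilon_i\big((1+c')g(z_i)-c'(1-h^2)g(z_i)^2\big)-c''\,\hat{\mathcal L}_S\big(g-(1-h^2)g^2\big)\Big]\ge\frac t4\Big).$$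
   Context: $\mathcal D$ is a probability distribution on a measurable space $\mathcal Z$ and $S$ is an i.i.d. sample of size $m$ from $\mathcal D$. For a measurable bounded $g:\mathcal Z\to\mathbb R$, $\mathcal L_{\mathcal D}(g)=\mathbb E_{z\sim\mathcal D}g(z)$ and $\hat{\mathcal L}_S(g)=\frac1m\sum_{i=1}^m g(z_i)$; $g^2$ is the function $z\mapsto g(z)^2$. A Rademacher random variable takes values $\pm1$ each with probability $1/2$. The suprema are assumed to be measurable random variables. *)

theory Defs
  imports "HOL-Probability.Probability"
begin

definition sample_measure :: "'a measure \<Rightarrow> nat \<Rightarrow> (nat \<Rightarrow> 'a) measure" where
  "sample_measure D m = PiM {..<m} (\<lambda>_. D)"

definition rademacher_measure :: "nat \<Rightarrow> (nat \<Rightarrow> real) measure" where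
  "rademacher_measure m = PiM {..<m} (\<lambda>_. measure_pmf (pmf_of_set {-1, 1::real}))"

definition risk :: "'a measure \<Rightarrow> ('a \<Rightarrow> real) \<Rightarrow> real" where
  "risk D g = integral\<^sup>L D g"

definition emp_risk :: "nat \<Rightarrow> (nat \<Rightarrow> 'a) \<Rightarrow> ('a \<Rightarrow> real) \<Rightarrow> real" where
  "emp_risk m S g = (\<Sum>i<m. g (S i)) / real m"

end

theory Submission
  imports Defs
begin

lemma swap_distr:
  fixes D :: "'a measure" and I :: "'i set" and J :: "'i set"
  assumes D: "prob_space D" and fin: "finite I"
  shows "distr (PiM I (\<lambda>_. D) \<Otimes>\<^sub>M PiM I (\<lambda>_. D)) (PiM I (\<lambda>_. D))
           (\<lambda>(S,S'). \<lambda>i\<in>I. if i \<in> J then S' i else S i) = PiM I (\<lambda>_. D)"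
proof -
  interpret P: product_prob_space "\<lambda>_::'i. D"
    by (rule product_prob_spaceI) (rule D)
  have MIp: "prob_space (PiM I (\<lambda>_. D))"
    by (rule prob_space_PiM) (rule D)
  have meas: "(\<lambda>(S,S'). \<lambda>i\<in>I. if i \<in> J then S' i else S i)
      \<in> measurable (PiM I (\<lambda>_. D) \<Otimes>\<^sub>M PiM I (\<lambda>_. D)) (PiM I (\<lambda>_. D))"
    by measurable
  show ?thesis
  proof (rule P.PiM_eqI[OF fin])
    show "sets (distr (PiM I (\<lambda>_. D) \<Otimes>\<^sub>M PiM I (\<lambda>_. D)) (PiM I (\<lambda>_. D))
           (\<lambda>(S,S'). \<lambda>i\<in>I. if i \<in> J then S' i else S i)) = sets (PiM I (\<lambda>_. D))" by simp
    fix A assume A: "\<And>i. i \<in> I \<Longrightarrow> A i \<in> sets D"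
    define A1 where "A1 = (\<lambda>i. if i \<in> J then space D else A i)"
    define A2 where "A2 = (\<lambda>i. if i \<in> J then A i else space D)"
    have sub: "\<And>i. i \<in> I \<Longrightarrow> A i \<subseteq> space D" using A sets.sets_into_space by blast
    have A1s: "\<And>i. i \<in> I \<Longrightarrow> A1 i \<in> sets D" and A2s: "\<And>i. i \<in> I \<Longrightarrow> A2 i \<in> sets D"
      using A by (auto simp: A1_def A2_def)
    have pre: "(\<lambda>(S,S'). \<lambda>i\<in>I. if i \<in> J then S' i else S i) -` PiE I A
        \<inter> space (PiM I (\<lambda>_. D) \<Otimes>\<^sub>M PiM I (\<lambda>_. D)) = PiE I A1 \<times> PiE I A2"
      using sub by (auto simp: space_pair_measure space_PiM PiE_iff A1_def A2_def split: if_splits) (metis subsetD)+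
    have PA: "PiE I A \<in> sets (PiM I (\<lambda>_. D))" using A by (intro sets_PiM_I_finite fin) auto
    have "emeasure (distr (PiM I (\<lambda>_. D) \<Otimes>\<^sub>M PiM I (\<lambda>_. D)) (PiM I (\<lambda>_. D))
           (\<lambda>(S,S'). \<lambda>i\<in>I. if i \<in> J then S' i else S i)) (PiE I A)
        = emeasure (PiM I (\<lambda>_. D) \<Otimes>\<^sub>M PiM I (\<lambda>_. D)) (PiE I A1 \<times> PiE I A2)"
      by (subst emeasure_distr[OF meas PA]) (simp add: pre)
    also have "\<dots> = emeasure (PiM I (\<lambda>_. D)) (PiE I A1) * emeasure (PiM I (\<lambda>_. D)) (PiE I A2)"
      using A1s A2s by (intro sigma_finite_measure.emeasure_pair_measure_Times[OF prob_space_imp_sigma_finite[OF MIp]] sets_PiM_I_finite fin) auto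
    also have "\<dots> = (\<Prod>i\<in>I. emeasure D (A1 i)) * (\<Prod>i\<in>I. emeasure D (A2 i))"
      using A1s A2s by (simp add: P.emeasure_PiM fin)
    also have "\<dots> = (\<Prod>i\<in>I. emeasure D (A1 i) * emeasure D (A2 i))"
      by (simp add: prod.distrib)
    also have "\<dots> = (\<Prod>i\<in>I. emeasure D (A i))"
      by (intro prod.cong) (auto simp: A1_def A2_def prob_space.emeasure_space_1[OF D])
    finally show "emeasure (distr (PiM I (\<lambda>_. D) \<Otimes>\<^sub>M PiM I (\<lambda>_. D)) (PiM I (\<lambda>_. D))
           (\<lambda>(S,S'). \<lambda>i\<in>I. if i \<in> J then S' i else S i)) (PiE I A) = (\<Prod>i\<in>I. emeasure D (A i))" .
  qed
qed

lemma neg_distr: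
  "distr (rademacher_measure m) (rademacher_measure m) (\<lambda>e. \<lambda>i\<in>{..<m}. - e i) = rademacher_measure m"
proof -
  let ?p = "pmf_of_set {-1, 1::real}"
  have "distr (rademacher_measure m) (rademacher_measure m) (compose {..<m} uminus)
     = PiM {..<m} (\<lambda>i. distr (measure_pmf ?p) (measure_pmf ?p) uminus)"
    unfolding rademacher_measure_def
    by (rule distr_PiM_finite_prob_space') (auto simp: prob_space_measure_pmf)
  also have "(\<lambda>i. distr (measure_pmf ?p) (measure_pmf ?p) uminus) = (\<lambda>i. measure_pmf ?p)"
  proof -
    have "distr (measure_pmf ?p) (measure_pmf ?p) uminus = distr (measure_pmf ?p) (count_space UNIV) uminus"
      by (rule distr_cong) auto
    also have "\<dots> = measure_pmf (map_pmf uminus ?p)" by (simp add: map_pmf_rep_eq)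
    also have "map_pmf uminus ?p = ?p"
      by (subst map_pmf_of_set_inj) (auto simp: inj_on_def insert_commute)
    finally show ?thesis by simp
  qed
  finally show ?thesis by (simp add: compose_def restrict_def rademacher_measure_def)
qed

lemma second_moment:
  fixes D :: "'a measure" and Y :: "'a \<Rightarrow> real" and m :: nat
  assumes D: "prob_space D" and Ym[measurable]: "Y \<in> borel_measurable D"
    and bnd: "\<And>z. z \<in> space D \<Longrightarrow> \<bar>Y z\<bar> \<le> K"
    and zero: "integral\<^sup>L D Y = 0" and s: "s > 0"
  shows "measure (PiM {..<m} (\<lambda>_. D)) {S \<in> space (PiM {..<m} (\<lambda>_. D)). s \<le> (\<Sum>i<m. Y (S i))}
         \<le> real m * integral\<^sup>L D (\<lambda>z. (Y z)^2) / s^2"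
proof -
  let ?M = "PiM {..<m} (\<lambda>_. D)"
  interpret P: product_prob_space "\<lambda>_::nat. D"
    by (rule product_prob_spaceI) (rule D)
  have MIp: "prob_space ?M" by (rule prob_space_PiM) (rule D)
  have Mfin: "finite_measure ?M" using MIp by (simp add: prob_space_def)
  have Dfin: "finite_measure D" using D by (simp add: prob_space_def)
  have intY: "integrable D Y"
    by (rule finite_measure.integrable_const_bound[OF Dfin, where B=K]) (auto simp: bnd)
  have intY2: "integrable D (\<lambda>z. (Y z)^2)"
    by (rule finite_measure.integrable_const_bound[OF Dfin, where B="K^2"])
       (auto intro!: AE_I2, metis power2_abs power_mono abs_ge_zero bnd)
  have Kn: "K \<ge> 0" if "space D \<noteq> {}" using that bnd by (meson abs_ge_zero ex_in_conv order_trans)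
  have comp: "i < m \<Longrightarrow> distr ?M D (\<lambda>S. S i) = D" for i
    by (rule distr_PiM_component) (auto simp: D)
  have cross: "integral\<^sup>L ?M (\<lambda>S. Y (S i) * Y (S j)) = (if i = j then integral\<^sup>L D (\<lambda>z. (Y z)^2) else 0)"
    if ij: "i < m" "j < m" for i j
  proof (cases "i = j")
    case True
    have "integral\<^sup>L ?M (\<lambda>S. Y (S i) * Y (S j)) = integral\<^sup>L ?M (\<lambda>S. (\<lambda>z. (Y z)^2) (S i))"
      using True by (simp add: power2_eq_square)
    also have "\<dots> = integral\<^sup>L (distr ?M D (\<lambda>S. S i)) (\<lambda>z. (Y z)^2)"
      using ij by (subst integral_distr) auto
    also have "\<dots> = integral\<^sup>L D (\<lambda>z. (Y z)^2)" using comp ij by simp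
    finally show ?thesis using True by simp
  next
    case False
    define f where "f = (\<lambda>k::nat. if k = i \<or> k = j then Y else (\<lambda>_. 1::real))"
    have "(\<lambda>S. Y (S i) * Y (S j)) = (\<lambda>S. \<Prod>k<m. f k (S k))"
    proof
      fix S
      have "(\<Prod>k<m. f k (S k)) = (\<Prod>k\<in>{i,j}. f k (S k))"
        by (rule prod.mono_neutral_right) (auto simp: f_def ij)
      also have "\<dots> = Y (S i) * Y (S j)" using False by (simp add: f_def)
      finally show "Y (S i) * Y (S j) = (\<Prod>k<m. f k (S k))" by simp
    qed
    moreover have "integral\<^sup>L ?M (\<lambda>S. \<Prod>k<m. f k (S k)) = (\<Prod>k<m. integral\<^sup>L D (f k))"
      by (rule P.product_integral_prod) (auto simp: f_def intY)
    moreover have "(\<Prod>k<m. integral\<^sup>L D (f k)) = 0"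
      using ij by (intro prod_zero) (auto simp: f_def zero intro!: bexI[of _ i])
    ultimately show ?thesis using False by simp
  qed
  have intprod: "integrable ?M (\<lambda>S. Y (S i) * Y (S j))" if "i < m" "j < m" for i j
  proof (rule finite_measure.integrable_const_bound[OF Mfin, where B="K^2"])
    show "AE x in ?M. norm (Y (x i) * Y (x j)) \<le> K^2"
    proof (rule AE_I2)
      fix x assume x: "x \<in> space ?M"
      then have "x i \<in> space D" "x j \<in> space D" using that by (auto simp: space_PiM)
      then have "\<bar>Y (x i)\<bar> \<le> K" "\<bar>Y (x j)\<bar> \<le> K" by (auto intro: bnd)
      then show "norm (Y (x i) * Y (x j)) \<le> K^2"
        by (simp add: abs_mult power2_eq_square mult_mono')
    qed
    next
    have "(\<lambda>x. Y (x k)) \<in> borel_measurable ?M" if "k < m" for k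
      using measurable_compose[OF measurable_component_singleton[of k "{..<m}" "\<lambda>_. D"] Ym] that by simp
    then show "(\<lambda>x. Y (x i) * Y (x j)) \<in> borel_measurable ?M" using that by auto
  qed
  have sq: "(\<lambda>S. (\<Sum>i<m. Y (S i))^2) = (\<lambda>S. \<Sum>i<m. \<Sum>j<m. Y (S i) * Y (S j))"
    by (simp add: power2_eq_square sum_product)
  have E2: "integral\<^sup>L ?M (\<lambda>S. (\<Sum>i<m. Y (S i))^2) = real m * integral\<^sup>L D (\<lambda>z. (Y z)^2)"
  proof -
    have "integral\<^sup>L ?M (\<lambda>S. \<Sum>i<m. \<Sum>j<m. Y (S i) * Y (S j))
        = (\<Sum>i<m. integral\<^sup>L ?M (\<lambda>S. \<Sum>j<m. Y (S i) * Y (S j)))"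
      by (rule Bochner_Integration.integral_sum[where I="{..<m}" and M="Pi\<^sub>M {..<m} (\<lambda>_. D)" and f="\<lambda>i S. \<Sum>j<m. Y (S i) * Y (S j)"]) (auto intro!: integrable_sum intprod)
    also have "\<dots> = (\<Sum>i<m. \<Sum>j<m. integral\<^sup>L ?M (\<lambda>S. Y (S i) * Y (S j)))"
      by (intro sum.cong refl) (rule Bochner_Integration.integral_sum[where I="{..<m}" and M="Pi\<^sub>M {..<m} (\<lambda>_. D)" and f="\<lambda>j S. Y (S _) * Y (S j)"], auto intro!: intprod)
    also have "\<dots> = (\<Sum>i<m. \<Sum>j<m. if i = j then integral\<^sup>L D (\<lambda>z. (Y z)^2) else 0)"
      by (intro sum.cong refl) (simp add: cross)
    also have "\<dots> = real m * integral\<^sup>L D (\<lambda>z. (Y z)^2)"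
      by (simp add: sum.delta)
    finally show ?thesis unfolding sq .
  qed
  have int2: "integrable ?M (\<lambda>S. (\<Sum>i<m. Y (S i))^2)"
    unfolding sq by (auto intro!: integrable_sum intprod)
  have "{S \<in> space ?M. s \<le> (\<Sum>i<m. Y (S i))} \<subseteq> {S \<in> space ?M. s^2 \<le> (\<Sum>i<m. Y (S i))^2}"
    using s by (auto intro!: power_mono)
  then have "measure ?M {S \<in> space ?M. s \<le> (\<Sum>i<m. Y (S i))} \<le> measure ?M {S \<in> space ?M. s^2 \<le> (\<Sum>i<m. Y (S i))^2}"
    by (intro finite_measure.finite_measure_mono[OF Mfin]) measurable
  also have "\<dots> \<le> integral\<^sup>L ?M (\<lambda>S. (\<Sum>i<m. Y (S i))^2) / s^2"
    by (rule integral_Markov_inequality_measure[OF int2, where A="space ?M"]) (use s in auto)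
  finally show ?thesis using E2 by simp
qed

lemma bounded_integrable:
  fixes f :: "'a \<Rightarrow> real"
  assumes D: "prob_space D" and f: "f \<in> borel_measurable D" and b: "\<And>z. z \<in> space D \<Longrightarrow> \<bar>f z\<bar> \<le> B"
  shows "integrable D f"
proof -
  have Dfin: "finite_measure D" using D by (simp add: prob_space_def)
  show ?thesis
    by (rule finite_measure.integrable_const_bound[OF Dfin, where B=B]) (auto intro!: AE_I2 b f)
qed

lemma sum_comp_meas:
  fixes f :: "'a \<Rightarrow> real" and m :: nat
  assumes "f \<in> borel_measurable D"
  shows "(\<lambda>S. \<Sum>i<m. f (S i)) \<in> borel_measurable (PiM {..<m} (\<lambda>_. D))"
proof (rule borel_measurable_sum)
  fix i :: nat assume "i \<in> {..<m}"
  then show "(\<lambda>S. f (S i)) \<in> borel_measurable (PiM {..<m} (\<lambda>_. D))"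
    using measurable_compose[OF measurable_component_singleton[of i "{..<m}" "\<lambda>_. D"] assms] by simp
qed

lemma good_prob:
  fixes D :: "'a measure" and g :: "'a \<Rightarrow> real"
  assumes D: "prob_space D" and gm[measurable]: "g \<in> borel_measurable D"
    and gr: "\<And>z. z \<in> space D \<Longrightarrow> 0 \<le> g z \<and> g z \<le> 1"
    and c2: "c2 > 0" and h: "0 < h" "h \<le> 1" and m: "m \<ge> 1"
    and t: "t \<ge> (1 + c2) * (1 + c2 * h^2) / (real m * c2 * h^2)"
  shows "measure (PiM {..<m} (\<lambda>_. D)) {S \<in> space (PiM {..<m} (\<lambda>_. D)).
           emp_risk m S (\<lambda>z. (1 + c2) * g z - c2 * (1 - h^2) * (g z)^2) < risk D g - t/2} \<le> 1/2"
proof -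
  interpret DD: prob_space D by (rule D)
  let ?M = "PiM {..<m} (\<lambda>_. D)"
  define k where "k = c2 * h^2"
  have k: "k > 0" using c2 h by (simp add: k_def)
  define X where "X = (\<lambda>z. g z + k * (g z)^2)"
  define q where "q = integral\<^sup>L D (\<lambda>z. (g z)^2)"
  define E0 where "E0 = integral\<^sup>L D X"
  define Y where "Y = (\<lambda>z. E0 - X z)"
  have mpos: "real m > 0" using m by simp
  have tpos: "t > 0"
  proof -
    have "(1 + c2) * (1 + c2 * h^2) / (real m * c2 * h^2) > 0" using c2 h mpos by (auto intro!: divide_pos_pos mult_pos_pos add_pos_pos)
    then show ?thesis using t by linarith
  qed
  have Xm[measurable]: "X \<in> borel_measurable D" unfolding X_def by measurable
  have Xr: "0 \<le> X z \<and> X z \<le> 1 + k" if "z \<in> space D" for z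
  proof -
    have "(g z)^2 \<le> 1" using gr[OF that] by (simp add: power_le_one)
    then show ?thesis using gr[OF that] k unfolding X_def
      by (auto intro!: add_mono mult_left_le)
  qed
  have intg: "integrable D g" by (rule bounded_integrable[OF D gm, where B=1]) (use gr in auto)
  have intg2: "integrable D (\<lambda>z. (g z)^2)" by (rule bounded_integrable[OF D, where B=1]) (use gr in \<open>auto simp: power_le_one\<close>)
  have intX: "integrable D X" by (rule bounded_integrable[OF D Xm, where B="1+k"]) (use Xr in auto)
  have intX2: "integrable D (\<lambda>z. (X z)^2)"
    by (rule bounded_integrable[OF D, where B="(1+k)^2"]) (use Xr in \<open>auto intro!: power_mono\<close>)
  have E0: "E0 = risk D g + k * q" unfolding E0_def X_def q_def risk_def
    using intg intg2 by simp
  have E0r: "0 \<le> E0 \<and> E0 \<le> 1 + k"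
  proof -
    have "0 \<le> E0" unfolding E0_def by (rule integral_nonneg_AE) (use Xr in \<open>auto intro!: AE_I2\<close>)
    moreover have "E0 \<le> integral\<^sup>L D (\<lambda>_. 1 + k)" unfolding E0_def
      by (rule integral_mono[OF intX]) (use Xr in auto)
    ultimately show ?thesis by (simp add: DD.prob_space)
  qed
  have Ym: "Y \<in> borel_measurable D" unfolding Y_def by measurable
  have Yb: "\<bar>Y z\<bar> \<le> 1 + k" if "z \<in> space D" for z using Xr[OF that] E0r unfolding Y_def by auto
  have Y0: "integral\<^sup>L D Y = 0" unfolding Y_def using intX by (simp add: E0_def DD.prob_space)
  have qn: "q \<ge> 0" unfolding q_def by (rule integral_nonneg_AE) auto
  define s where "s = real m * (t/2 + k * q)"
  have s: "s > 0" unfolding s_def using mpos tpos k qn by (auto intro!: mult_pos_pos add_pos_nonneg)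
  have sub: "{S \<in> space ?M. emp_risk m S (\<lambda>z. (1 + c2) * g z - c2 * (1 - h^2) * (g z)^2) < risk D g - t/2}
      \<subseteq> {S \<in> space ?M. s \<le> (\<Sum>i<m. Y (S i))}"
  proof safe
    fix S assume S: "S \<in> space ?M"
      and lt: "emp_risk m S (\<lambda>z. (1 + c2) * g z - c2 * (1 - h^2) * (g z)^2) < risk D g - t/2"
    have Si: "S i \<in> space D" if "i < m" for i using S that by (auto simp: space_PiM)
    have "(\<Sum>i<m. X (S i)) \<le> (\<Sum>i<m. (1 + c2) * g (S i) - c2 * (1 - h^2) * (g (S i))^2)"
    proof (rule sum_mono)
      fix i assume "i \<in> {..<m}"
      then have "0 \<le> g (S i)" "g (S i) \<le> 1" using gr Si by auto
      then have "(g (S i))^2 \<le> g (S i)" by (simp add: power2_eq_square mult_left_le)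
      then show "X (S i) \<le> (1 + c2) * g (S i) - c2 * (1 - h^2) * (g (S i))^2"
        unfolding X_def k_def using c2 by (simp add: algebra_simps)
    qed
    also have "\<dots> < real m * (risk D g - t/2)"
      using lt mpos by (simp add: emp_risk_def field_simps)
    finally have "(\<Sum>i<m. X (S i)) < real m * (risk D g - t/2)" .
    then show "s \<le> (\<Sum>i<m. Y (S i))"
      unfolding Y_def s_def by (simp add: sum_subtractf E0 algebra_simps)
  qed
  have "measure ?M {S \<in> space ?M. emp_risk m S (\<lambda>z. (1 + c2) * g z - c2 * (1 - h^2) * (g z)^2) < risk D g - t/2}
      \<le> measure ?M {S \<in> space ?M. s \<le> (\<Sum>i<m. Y (S i))}"
    using sub prob_space_PiM[of "{..<m}" "\<lambda>_. D", OF D]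
  proof (intro finite_measure.finite_measure_mono)
    show "finite_measure ?M" using prob_space_PiM[of "{..<m}" "\<lambda>_. D", OF D] by (simp add: prob_space_def)
    have "(\<lambda>S. \<Sum>i<m. Y (S i)) \<in> borel_measurable ?M" by (rule sum_comp_meas[OF Ym])
    then show "{S \<in> space ?M. s \<le> (\<Sum>i<m. Y (S i))} \<in> sets ?M" by measurable
  qed (rule sub)
  also have "\<dots> \<le> real m * integral\<^sup>L D (\<lambda>z. (Y z)^2) / s^2"
    by (rule second_moment[OF D Ym Yb Y0 s])
  also have "integral\<^sup>L D (\<lambda>z. (Y z)^2) \<le> (1 + k)^2 * q"
  proof -
    have "integral\<^sup>L D (\<lambda>z. (Y z)^2) = DD.variance X"
      unfolding Y_def E0_def by (simp add: power2_commute)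
    also have "\<dots> = integral\<^sup>L D (\<lambda>z. (X z)^2) - E0^2"
      using DD.variance_eq[OF intX intX2] by (simp add: E0_def)
    also have "\<dots> \<le> integral\<^sup>L D (\<lambda>z. (X z)^2)" by simp
    also have "\<dots> \<le> integral\<^sup>L D (\<lambda>z. (1 + k)^2 * (g z)^2)"
    proof (rule integral_mono[OF intX2])
      show "integrable D (\<lambda>z. (1 + k)^2 * (g z)^2)" using intg2 by simp
      fix z assume z: "z \<in> space D"
      have "X z = g z * (1 + k * g z)" unfolding X_def by (simp add: power2_eq_square algebra_simps)
      moreover have "0 \<le> 1 + k * g z" "1 + k * g z \<le> 1 + k" using gr[OF z] k by (auto simp: mult_left_le)
      ultimately have "(X z)^2 = (g z)^2 * (1 + k * g z)^2" by (simp add: power_mult_distrib)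
      also have "\<dots> \<le> (g z)^2 * (1 + k)^2"
        using \<open>0 \<le> 1 + k * g z\<close> \<open>1 + k * g z \<le> 1 + k\<close> by (intro mult_left_mono power_mono) auto
      finally show "(X z)^2 \<le> (1 + k)^2 * (g z)^2" by (simp add: mult.commute)
    qed
    also have "\<dots> = (1 + k)^2 * q" unfolding q_def by simp
    finally show ?thesis .
  qed
  then have "real m * integral\<^sup>L D (\<lambda>z. (Y z)^2) / s^2 \<le> real m * ((1 + k)^2 * q) / s^2"
    using mpos s by (intro divide_right_mono mult_left_mono) auto
  also have "\<dots> \<le> 1/2"
  proof -
    have tk: "real m * t * k \<ge> (1 + k)^2"
    proof -
      have "(1 + c2) * (1 + k) \<ge> (1 + k) * (1 + k)"
        using k h c2 by (intro mult_right_mono) (auto simp: k_def power_le_one mult_left_le)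
      moreover have "(1 + c2) * (1 + k) / (real m * k) \<le> t" using t by (simp add: k_def mult.assoc)
      then have "(1 + c2) * (1 + k) \<le> t * (real m * k)" using mpos k by (simp add: pos_divide_le_eq)
      ultimately show ?thesis by (simp add: power2_eq_square algebra_simps)
    qed
    have amgm: "(t/2 + k*q)^2 \<ge> 2 * t * k * q"
    proof -
      have "(t/2 + k*q)^2 - 2 * t * k * q = (t/2 - k*q)^2" by (simp add: power2_eq_square algebra_simps)
      then show ?thesis by (smt (verit) zero_le_power2)
    qed
    have "2 * (real m * ((1 + k)^2 * q)) \<le> 2 * real m * (real m * t * k * q)"
    proof -
      have a1: "(1+k)^2*q \<le> real m * t * k * q" using mult_right_mono[OF tk qn] .
      show ?thesis using mult_left_mono[OF a1, of "2*real m"] mpos by (simp add: algebra_simps)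
    qed
    also have "\<dots> \<le> real m * real m * (t/2 + k*q)^2"
      using amgm mpos by (simp add: mult.assoc mult_left_mono)
    also have "\<dots> = s^2" unfolding s_def by (simp add: power2_eq_square)
    finally show ?thesis using s by (simp add: field_simps)
  qed
  finally show ?thesis .
qed

lemma sum_lin: "(\<Sum>i\<in>I. a i) / n - k * ((\<Sum>i\<in>I. b i) / n) = (\<Sum>i\<in>I. a i - k * b i) / (n::real)"
  by (simp add: sum_subtractf sum_distrib_left diff_divide_distrib)

lemma ereal_thresh:
  assumes "\<And>n::nat. ereal (a - 1 / real (Suc n)) \<le> x"
  shows "ereal a \<le> x"
proof (cases x)
  case (real r)
  show ?thesis
  proof (rule ccontr)
    assume "\<not> ereal a \<le> x"
    then have "r < a" using real by simp
    then obtain n where n: "inverse (real (Suc n)) < a - r" using reals_Archimedean by (metis diff_gt_0_iff_gt)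
    have "a - 1 / real (Suc n) \<le> r" using assms[of n] real by simp
    then show False using n by (simp add: inverse_eq_divide)
  qed
next
  case PInf then show ?thesis by simp
next
  case MInf then show ?thesis using assms[of 0] by simp
qed

theorem mainTheorem6:
  fixes D :: "'a measure" and G :: "('a \<Rightarrow> real) set"
    and c c2 h t :: real and m :: nat
  assumes "prob_space D"
    and G_meas: "\<And>g. g \<in> G \<Longrightarrow> g \<in> borel_measurable D"
    and G_range: "\<And>g z. g \<in> G \<Longrightarrow> z \<in> space D \<Longrightarrow> 0 \<le> g z \<and> g z \<le> 1"
    and "c > c2" and "c2 > 0" and "0 < h" and "h \<le> 1"
    and "m \<ge> 1"
    and "t \<ge> (1 + c2) * (1 + c2 * h^2) / (real m * c2 * h^2)"
    and meas1: "(\<lambda>S. SUP g\<in>G. ereal (risk D g - (1 + c) * emp_risk m S g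
                   + c * (1 - h^2) * emp_risk m S (\<lambda>z. (g z)^2)))
               \<in> borel_measurable (sample_measure D m)"
    and meas2: "(\<lambda>(S, \<epsilon>). SUP g\<in>G. ereal ((\<Sum>i<m. \<epsilon> i * ((1 + (c + c2) / 2) * g (S i)
                   - (c + c2) / 2 * (1 - h^2) * (g (S i))^2)) / real m
                   - (c - c2) / 2 * emp_risk m S (\<lambda>z. g z - (1 - h^2) * (g z)^2)))
               \<in> borel_measurable (sample_measure D m \<Otimes>\<^sub>M rademacher_measure m)"
  shows "1/4 * measure (sample_measure D m)
            {S \<in> space (sample_measure D m).
               (SUP g\<in>G. ereal (risk D g - (1 + c) * emp_risk m S g
                   + c * (1 - h^2) * emp_risk m S (\<lambda>z. (g z)^2))) \<ge> ereal t}
         \<le> measure (sample_measure D m \<Otimes>\<^sub>M rademacher_measure m)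
            {(S, \<epsilon>) \<in> space (sample_measure D m \<Otimes>\<^sub>M rademacher_measure m).
               (SUP g\<in>G. ereal ((\<Sum>i<m. \<epsilon> i * ((1 + (c + c2) / 2) * g (S i)
                   - (c + c2) / 2 * (1 - h^2) * (g (S i))^2)) / real m
                   - (c - c2) / 2 * emp_risk m S (\<lambda>z. g z - (1 - h^2) * (g z)^2))) \<ge> ereal (t / 4)}"
proof -
  note D = \<open>prob_space D\<close>
  define M where "M = sample_measure D m"
  define R where "R = rademacher_measure m"
  have M_eq: "M = PiM {..<m} (\<lambda>_. D)" by (simp add: M_def sample_measure_def)
  have R_eq: "R = PiM {..<m} (\<lambda>_. measure_pmf (pmf_of_set {-1, 1::real}))" by (simp add: R_def rademacher_measure_def)
  have Mp: "prob_space M" unfolding M_eq by (rule prob_space_PiM) (rule D)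
  have Rp: "prob_space R" unfolding R_eq by (rule prob_space_PiM) (rule prob_space_measure_pmf)
  interpret M: prob_space M by (rule Mp)
  interpret R: prob_space R by (rule Rp)
  interpret MR: pair_prob_space M R by unfold_locales
  interpret MM: pair_prob_space M M by unfold_locales
  have MMp: "prob_space (M \<Otimes>\<^sub>M M)" by (rule MM.prob_space_axioms)
  interpret T: pair_prob_space R "M \<Otimes>\<^sub>M M" by (simp add: pair_prob_space_def pair_sigma_finite_def Rp MMp prob_space_imp_sigma_finite)
  define bv where "bv = (\<lambda>(g::'a \<Rightarrow> real) (S::nat \<Rightarrow> 'a) (\<epsilon>::nat \<Rightarrow> real). (\<Sum>i<m. \<epsilon> i * ((1 + (c + c2) / 2) * g (S i)
                   - (c + c2) / 2 * (1 - h^2) * (g (S i))^2)) / real m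
                   - (c - c2) / 2 * emp_risk m S (\<lambda>z. g z - (1 - h^2) * (g z)^2))"
  define \<Psi> where "\<Psi> = (\<lambda>S \<epsilon>. SUP g\<in>G. ereal (bv g S \<epsilon>))"
  define \<phi> where "\<phi> = (\<lambda>(g::'a \<Rightarrow> real) (S::nat \<Rightarrow> 'a). risk D g - (1 + c) * emp_risk m S g
                   + c * (1 - h^2) * emp_risk m S (\<lambda>z. (g z)^2))"
  define A where "A = {S \<in> space M. (SUP g\<in>G. ereal (\<phi> g S)) \<ge> ereal t}"
  define Bs where "Bs = (\<lambda>x. {p \<in> space (M \<Otimes>\<^sub>M R). \<Psi> (fst p) (snd p) \<ge> ereal x})"
  have meas2': "(\<lambda>p. \<Psi> (fst p) (snd p)) \<in> borel_measurable (M \<Otimes>\<^sub>M R)"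
    using meas2 unfolding \<Psi>_def bv_def M_def R_def by (simp add: split_beta')
  have Bs_sets: "Bs x \<in> sets (M \<Otimes>\<^sub>M R)" for x
    unfolding Bs_def using meas2' by measurable
  have A_sets: "A \<in> sets M"
    unfolding A_def \<phi>_def using meas1 unfolding M_def by measurable
  have goal_eq: "?thesis \<longleftrightarrow> 1/4 * measure M A \<le> measure (M \<Otimes>\<^sub>M R) (Bs (t/4))"
    unfolding A_def Bs_def \<Psi>_def bv_def \<phi>_def M_def R_def
    by (simp add: split_beta' case_prod_unfold)
  have key: "measure M A \<le> 4 * measure (M \<Otimes>\<^sub>M R) (Bs (t/4 - \<delta>))" if \<delta>: "\<delta> > 0" for \<delta>
  proof -
    define B where "B = Bs (t/4 - \<delta>)"
    have B_sets: "B \<in> sets (M \<Otimes>\<^sub>M R)" unfolding B_def by (rule Bs_sets)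
    define Uf where "Uf = (\<lambda>(\<epsilon>::nat\<Rightarrow>real) (S::nat\<Rightarrow>'a) S'. \<lambda>i\<in>{..<m}. if i \<in> {i. \<epsilon> i = 1} then S' i else S i)"
    define Vf where "Vf = (\<lambda>(\<epsilon>::nat\<Rightarrow>real) (S::nat\<Rightarrow>'a) S'. \<lambda>i\<in>{..<m}. if i \<in> {i. \<epsilon> i \<noteq> 1} then S' i else S i)"
    define ng where "ng = (\<lambda>\<epsilon>::nat\<Rightarrow>real. \<lambda>i\<in>{..<m}. - \<epsilon> i)"
    define T where "T = R \<Otimes>\<^sub>M (M \<Otimes>\<^sub>M M)"
    define C1 where "C1 = {x \<in> space T. (Uf (fst x) (fst (snd x)) (snd (snd x)), fst x) \<in> B}"
    define C2 where "C2 = {x \<in> space T. (Vf (fst x) (fst (snd x)) (snd (snd x)), ng (fst x)) \<in> B}"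
    have Ufm: "(\<lambda>x. Uf (fst x) (fst (snd x)) (snd (snd x))) \<in> measurable T M"
      unfolding Uf_def T_def M_eq R_eq by measurable
    have Vfm: "(\<lambda>x. Vf (fst x) (fst (snd x)) (snd (snd x))) \<in> measurable T M"
      unfolding Vf_def T_def M_eq R_eq by measurable
    have ngm: "ng \<in> measurable R R"
      unfolding ng_def R_eq
    proof (rule measurable_restrict)
      fix i :: nat assume i: "i \<in> {..<m}"
      show "(\<lambda>x. - x i) \<in> measurable (PiM {..<m} (\<lambda>_. measure_pmf (pmf_of_set {-1, 1::real}))) (measure_pmf (pmf_of_set {-1, 1::real}))"
        by (rule measurable_compose[OF measurable_component_singleton[OF i], where g=uminus]) simp
    qed
    have C1_sets: "C1 \<in> sets T"
    proof -
      have "(\<lambda>x. (Uf (fst x) (fst (snd x)) (snd (snd x)), fst x)) \<in> measurable T (M \<Otimes>\<^sub>M R)"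
        using Ufm by (auto simp: T_def intro!: measurable_Pair)
      from measurable_sets[OF this B_sets] show ?thesis unfolding C1_def by (simp add: vimage_def Int_def conj_commute)
    qed
    have C2_sets: "C2 \<in> sets T"
    proof -
      have "(\<lambda>x. (Vf (fst x) (fst (snd x)) (snd (snd x)), ng (fst x))) \<in> measurable T (M \<Otimes>\<^sub>M R)"
        using Vfm ngm by (auto simp: T_def intro!: measurable_Pair measurable_compose[OF measurable_fst ngm])
      from measurable_sets[OF this B_sets] show ?thesis unfolding C2_def by (simp add: vimage_def Int_def conj_commute)
    qed
    have Mfin: "finite_measure M" using Mp by (simp add: prob_space_def)
    have MRp: "prob_space (M \<Otimes>\<^sub>M R)" by (rule MR.prob_space_axioms)
    have MRfin: "finite_measure (M \<Otimes>\<^sub>M R)" using MRp by (simp add: prob_space_def)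
    have Tp: "prob_space T" unfolding T_def by (rule T.prob_space_axioms)
    have swapM: "distr (M \<Otimes>\<^sub>M M) M (\<lambda>(S,S'). \<lambda>i\<in>{..<m}. if i \<in> J then S' i else S i) = M" for J
      unfolding M_eq by (rule swap_distr[OF D]) simp
    have Ufe_m: "case_prod (Uf e) \<in> measurable (M \<Otimes>\<^sub>M M) M" for e
      unfolding Uf_def M_eq by measurable
    have Vfe_m: "case_prod (Vf e) \<in> measurable (M \<Otimes>\<^sub>M M) M" for e
      unfolding Vf_def M_eq by measurable
    have secB: "(\<lambda>S. (S, e)) -` B \<in> sets M" for e by (rule sets_Pair2[OF B_sets])
    have altT: "emeasure T X = (\<integral>\<^sup>+e. emeasure (M \<Otimes>\<^sub>M M) (Pair e -` X) \<partial>R)" if "X \<in> sets T" for X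
      unfolding T_def
      by (rule sigma_finite_measure.emeasure_pair_measure_alt[OF prob_space_imp_sigma_finite[OF MMp]])
         (use that in \<open>simp add: T_def\<close>)
    have altMR: "emeasure (M \<Otimes>\<^sub>M R) B = (\<integral>\<^sup>+e. emeasure M ((\<lambda>S. (S, e)) -` B) \<partial>R)"
      by (rule MR.emeasure_pair_measure_alt2[OF B_sets])
    have e1: "emeasure T C1 = emeasure (M \<Otimes>\<^sub>M R) B"
    proof -
      have "emeasure T C1 = (\<integral>\<^sup>+e. emeasure (M \<Otimes>\<^sub>M M) (Pair e -` C1) \<partial>R)" by (rule altT[OF C1_sets])
      also have "\<dots> = (\<integral>\<^sup>+e. emeasure M ((\<lambda>S. (S, e)) -` B) \<partial>R)"
      proof (rule nn_integral_cong)
        fix e assume e: "e \<in> space R"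
        have "Pair e -` C1 = case_prod (Uf e) -` ((\<lambda>S. (S, e)) -` B) \<inter> space (M \<Otimes>\<^sub>M M)"
          unfolding C1_def T_def using e by (auto simp: space_pair_measure)
        then have "emeasure (M \<Otimes>\<^sub>M M) (Pair e -` C1) = emeasure (distr (M \<Otimes>\<^sub>M M) M (case_prod (Uf e))) ((\<lambda>S. (S, e)) -` B)"
          by (simp add: emeasure_distr[OF Ufe_m secB])
        also have "distr (M \<Otimes>\<^sub>M M) M (case_prod (Uf e)) = M"
          unfolding Uf_def using swapM[of "{i. e i = 1}"] by simp
        finally show "emeasure (M \<Otimes>\<^sub>M M) (Pair e -` C1) = emeasure M ((\<lambda>S. (S, e)) -` B)" .
      qed
      also have "\<dots> = emeasure (M \<Otimes>\<^sub>M R) B" by (rule altMR[symmetric])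
      finally show ?thesis .
    qed
    have e2: "emeasure T C2 = emeasure (M \<Otimes>\<^sub>M R) B"
    proof -
      have "emeasure T C2 = (\<integral>\<^sup>+e. emeasure (M \<Otimes>\<^sub>M M) (Pair e -` C2) \<partial>R)" by (rule altT[OF C2_sets])
      also have "\<dots> = (\<integral>\<^sup>+e. emeasure M ((\<lambda>S. (S, ng e)) -` B) \<partial>R)"
      proof (rule nn_integral_cong)
        fix e assume e: "e \<in> space R"
        have "Pair e -` C2 = case_prod (Vf e) -` ((\<lambda>S. (S, ng e)) -` B) \<inter> space (M \<Otimes>\<^sub>M M)"
          unfolding C2_def T_def using e by (auto simp: space_pair_measure)
        then have "emeasure (M \<Otimes>\<^sub>M M) (Pair e -` C2) = emeasure (distr (M \<Otimes>\<^sub>M M) M (case_prod (Vf e))) ((\<lambda>S. (S, ng e)) -` B)"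
          by (simp add: emeasure_distr[OF Vfe_m secB])
        also have "distr (M \<Otimes>\<^sub>M M) M (case_prod (Vf e)) = M"
          unfolding Vf_def using swapM[of "{i. e i \<noteq> 1}"] by simp
        finally show "emeasure (M \<Otimes>\<^sub>M M) (Pair e -` C2) = emeasure M ((\<lambda>S. (S, ng e)) -` B)" .
      qed
      also have "\<dots> = (\<integral>\<^sup>+e. emeasure M ((\<lambda>S. (S, e)) -` B) \<partial>distr R R ng)"
        using nn_integral_distr[OF ngm, of "\<lambda>e. emeasure M ((\<lambda>S. (S, e)) -` B)"] MR.measurable_emeasure_Pair2[OF B_sets] by simp
      also have "distr R R ng = R" unfolding R_def ng_def by (rule neg_distr)
      also have "(\<integral>\<^sup>+e. emeasure M ((\<lambda>S. (S, e)) -` B) \<partial>R) = emeasure (M \<Otimes>\<^sub>M R) B" by (rule altMR[symmetric])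
      finally show ?thesis .
    qed
    define E where "E = PiE {..<m} (\<lambda>_. {-1, 1::real})"
    have E_sets: "E \<in> sets R" unfolding E_def R_eq by (rule sets_PiM_I_finite) auto
    have RE: "emeasure R E = 1"
    proof -
      interpret PR: product_prob_space "\<lambda>_::nat. measure_pmf (pmf_of_set {-1, 1::real})"
        by (rule product_prob_spaceI) (rule prob_space_measure_pmf)
      have "emeasure R E = (\<Prod>i<m. emeasure (measure_pmf (pmf_of_set {-1, 1::real})) {-1, 1})"
        unfolding E_def R_eq by (rule PR.emeasure_PiM) auto
      also have "\<dots> = 1" by (simp add: emeasure_pmf_of_set)
      finally show ?thesis .
    qed
    have ESR: "E \<subseteq> space R" unfolding E_def R_eq by (auto simp: space_PiM PiE_iff)
    have bv_sum: "bv g S0 e = (\<Sum>i<m. e i * ((1 + (c + c2) / 2) * g (S0 i) - (c + c2) / 2 * (1 - h^2) * (g (S0 i))^2)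
          - (c - c2) / 2 * (g (S0 i) - (1 - h^2) * (g (S0 i))^2)) / real m" for g S0 e
      unfolding bv_def emp_risk_def by (rule sum_lin)
    have phi_sum: "\<phi> g S0 = risk D g - (\<Sum>i<m. (1 + c) * g (S0 i) - c * (1 - h^2) * (g (S0 i))^2) / real m" for g S0
      unfolding \<phi>_def emp_risk_def by (simp add: sum_subtractf sum_distrib_left diff_divide_distrib)
    have core: "ennreal (1/2) \<le> emeasure M (Pair S -` Pair e -` (C1 \<union> C2))" if S: "S \<in> A" and e: "e \<in> E" for S e
    proof -
      have SM: "S \<in> space M" using S by (simp add: A_def)
      have "ereal (t - 2*\<delta>) < (SUP g\<in>G. ereal (\<phi> g S))"
        using S \<delta> by (auto simp: A_def intro: less_le_trans[of _ "ereal t"])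
      then obtain g where g: "g \<in> G" and gphi: "t - 2*\<delta> < \<phi> g S" by (auto simp: less_SUP_iff)
      define Bad where "Bad = {S' \<in> space M. emp_risk m S' (\<lambda>z. (1 + c2) * g z - c2 * (1 - h^2) * (g z)^2) < risk D g - t/2}"
      have Bad_le: "measure M Bad \<le> 1/2"
        unfolding Bad_def M_eq
        by (rule good_prob[OF D G_meas[OF g] G_range[OF g]]) (use assms(5-9) in auto)
      have Bad_sets: "Bad \<in> sets M"
      proof -
        have gm: "g \<in> borel_measurable D" by (rule G_meas[OF g])
        have "(\<lambda>S'. \<Sum>i<m. (1 + c2) * g (S' i) - c2 * (1 - h^2) * (g (S' i))^2) \<in> borel_measurable M"
          unfolding M_eq by (rule sum_comp_meas[where f="\<lambda>z. (1 + c2) * g z - c2 * (1 - h^2) * (g z)^2"]) (use gm in measurable)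
        then show ?thesis unfolding Bad_def emp_risk_def by measurable
      qed
      define Gd where "Gd = space M - Bad"
      have "measure M Gd = 1 - measure M Bad" unfolding Gd_def by (rule M.prob_compl[OF Bad_sets])
      then have "measure M Gd \<ge> 1/2" using Bad_le by simp
      then have Gd_ge: "ennreal (1/2) \<le> emeasure M Gd" by (subst M.emeasure_eq_measure) (rule ennreal_leI)
      have "Gd \<subseteq> Pair S -` Pair e -` (C1 \<union> C2)"
      proof
        fix S' assume S': "S' \<in> Gd"
        then have S'M: "S' \<in> space M" and good: "\<not> emp_risk m S' (\<lambda>z. (1 + c2) * g z - c2 * (1 - h^2) * (g z)^2) < risk D g - t/2"
          by (auto simp: Gd_def Bad_def)
        have eR: "e \<in> space R" using e ESR by auto
        have epm: "e i = 1 \<or> e i = -1" if "i < m" for i using e that by (auto simp: E_def)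
        have SD: "S i \<in> space D" "S' i \<in> space D" if "i < m" for i using SM S'M that by (auto simp: M_eq space_PiM)
        define U where "U = Uf e S S'"
        define V where "V = Vf e S S'"
        have UM: "U \<in> space M" "V \<in> space M" unfolding U_def V_def Uf_def Vf_def M_eq using SD by (auto simp: space_PiM)
        have ngR: "ng e \<in> space R" unfolding ng_def R_eq by (auto simp: space_PiM)
        have per: "e i * ((1 + (c + c2) / 2) * g (U i) - (c + c2) / 2 * (1 - h^2) * (g (U i))^2)
              - (c - c2) / 2 * (g (U i) - (1 - h^2) * (g (U i))^2)
            + (ng e i * ((1 + (c + c2) / 2) * g (V i) - (c + c2) / 2 * (1 - h^2) * (g (V i))^2)
              - (c - c2) / 2 * (g (V i) - (1 - h^2) * (g (V i))^2))
            = ((1 + c2) * g (S' i) - c2 * (1 - h^2) * (g (S' i))^2)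
              - ((1 + c) * g (S i) - c * (1 - h^2) * (g (S i))^2)" if i: "i < m" for i
        proof (cases "e i = 1")
          case True
          then show ?thesis using i unfolding U_def V_def Uf_def Vf_def ng_def by (simp add: field_simps)
        next
          case False
          then have "e i = -1" using epm[OF i] by simp
          then show ?thesis using i unfolding U_def V_def Uf_def Vf_def ng_def by (simp add: field_simps)
        qed
        have sumeq: "bv g U e + bv g V (ng e) = emp_risk m S' (\<lambda>z. (1 + c2) * g z - c2 * (1 - h^2) * (g z)^2)
            - (\<Sum>i<m. (1 + c) * g (S i) - c * (1 - h^2) * (g (S i))^2) / real m"
        proof -
          have "bv g U e + bv g V (ng e) = ((\<Sum>i<m. e i * ((1 + (c + c2) / 2) * g (U i) - (c + c2) / 2 * (1 - h^2) * (g (U i))^2)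
              - (c - c2) / 2 * (g (U i) - (1 - h^2) * (g (U i))^2))
            + (\<Sum>i<m. ng e i * ((1 + (c + c2) / 2) * g (V i) - (c + c2) / 2 * (1 - h^2) * (g (V i))^2)
              - (c - c2) / 2 * (g (V i) - (1 - h^2) * (g (V i))^2))) / real m"
            unfolding bv_sum by (simp only: add_divide_distrib)
          also have "(\<Sum>i<m. e i * ((1 + (c + c2) / 2) * g (U i) - (c + c2) / 2 * (1 - h^2) * (g (U i))^2)
              - (c - c2) / 2 * (g (U i) - (1 - h^2) * (g (U i))^2))
            + (\<Sum>i<m. ng e i * ((1 + (c + c2) / 2) * g (V i) - (c + c2) / 2 * (1 - h^2) * (g (V i))^2)
              - (c - c2) / 2 * (g (V i) - (1 - h^2) * (g (V i))^2))
            = (\<Sum>i<m. e i * ((1 + (c + c2) / 2) * g (U i) - (c + c2) / 2 * (1 - h^2) * (g (U i))^2)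
              - (c - c2) / 2 * (g (U i) - (1 - h^2) * (g (U i))^2)
            + (ng e i * ((1 + (c + c2) / 2) * g (V i) - (c + c2) / 2 * (1 - h^2) * (g (V i))^2)
              - (c - c2) / 2 * (g (V i) - (1 - h^2) * (g (V i))^2)))"
            by (rule sum.distrib[symmetric])
          also have "\<dots> = (\<Sum>i<m. ((1 + c2) * g (S' i) - c2 * (1 - h^2) * (g (S' i))^2)
              - ((1 + c) * g (S i) - c * (1 - h^2) * (g (S i))^2))"
            by (intro sum.cong refl per) simp
          finally show ?thesis unfolding emp_risk_def by (simp only: sum_subtractf diff_divide_distrib)
        qed
        have "bv g U e + bv g V (ng e) > t/2 - 2*\<delta>"
          using sumeq good gphi unfolding phi_sum by linarith
        then have "bv g U e \<ge> t/4 - \<delta> \<or> bv g V (ng e) \<ge> t/4 - \<delta>" by linarith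
        then have "(U, e) \<in> B \<or> (V, ng e) \<in> B"
        proof
          assume h1: "bv g U e \<ge> t/4 - \<delta>"
          have "ereal (t/4 - \<delta>) \<le> ereal (bv g U e)" using h1 by simp
          also have "\<dots> \<le> \<Psi> U e" unfolding \<Psi>_def by (rule SUP_upper[OF g])
          finally show ?thesis using UM eR by (simp add: B_def Bs_def space_pair_measure)
        next
          assume h1: "bv g V (ng e) \<ge> t/4 - \<delta>"
          have "ereal (t/4 - \<delta>) \<le> ereal (bv g V (ng e))" using h1 by simp
          also have "\<dots> \<le> \<Psi> V (ng e)" unfolding \<Psi>_def by (rule SUP_upper[OF g])
          finally show ?thesis using UM ngR by (simp add: B_def Bs_def space_pair_measure)
        qed
        moreover have "(e, (S, S')) \<in> space T" using eR SM S'M by (simp add: T_def space_pair_measure)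
        ultimately show "S' \<in> Pair S -` Pair e -` (C1 \<union> C2)"
          unfolding C1_def C2_def U_def V_def by auto
      qed
      then have "emeasure M Gd \<le> emeasure M (Pair S -` Pair e -` (C1 \<union> C2))"
      proof (rule emeasure_mono)
        have Q: "Pair e -` (C1 \<union> C2) \<in> sets (M \<Otimes>\<^sub>M M)"
          using sets_Pair1[of "C1 \<union> C2" R "M \<Otimes>\<^sub>M M"] C1_sets C2_sets by (simp add: T_def)
        show "Pair S -` Pair e -` (C1 \<union> C2) \<in> sets M" by (rule sets_Pair1[OF Q])
      qed
      then show ?thesis using Gd_ge by simp
    qed
    have CU_sets: "C1 \<union> C2 \<in> sets T" using C1_sets C2_sets by simp
    have sec_lower: "ennreal (1/2) * emeasure M A \<le> emeasure (M \<Otimes>\<^sub>M M) (Pair e -` (C1 \<union> C2))" if e: "e \<in> E" for e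
    proof -
      have Q: "Pair e -` (C1 \<union> C2) \<in> sets (M \<Otimes>\<^sub>M M)" by (rule sets_Pair1) (use CU_sets in \<open>simp add: T_def\<close>)
      have "ennreal (1/2) * emeasure M A = (\<integral>\<^sup>+S. ennreal (1/2) * indicator A S \<partial>M)"
        by (rule nn_integral_cmult_indicator[OF A_sets, symmetric])
      also have "\<dots> \<le> (\<integral>\<^sup>+S. emeasure M (Pair S -` Pair e -` (C1 \<union> C2)) \<partial>M)"
      proof (rule nn_integral_mono)
        fix S assume "S \<in> space M"
        show "ennreal (1/2) * indicator A S \<le> emeasure M (Pair S -` Pair e -` (C1 \<union> C2))"
          by (cases "S \<in> A") (use core[OF _ e, of S] in auto)
      qed
      also have "\<dots> = emeasure (M \<Otimes>\<^sub>M M) (Pair e -` (C1 \<union> C2))"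
        by (rule sigma_finite_measure.emeasure_pair_measure_alt[OF prob_space_imp_sigma_finite[OF Mp] Q, symmetric])
      finally show ?thesis .
    qed
    have lo: "ennreal (1/2) * emeasure M A \<le> emeasure T (C1 \<union> C2)"
    proof -
      have "ennreal (1/2) * emeasure M A = (\<integral>\<^sup>+e. (ennreal (1/2) * emeasure M A) * indicator E e \<partial>R)"
        using RE by (simp add: nn_integral_cmult_indicator[OF E_sets])
      also have "\<dots> \<le> (\<integral>\<^sup>+e. emeasure (M \<Otimes>\<^sub>M M) (Pair e -` (C1 \<union> C2)) \<partial>R)"
      proof (rule nn_integral_mono)
        fix e assume "e \<in> space R"
        show "ennreal (1/2) * emeasure M A * indicator E e \<le> emeasure (M \<Otimes>\<^sub>M M) (Pair e -` (C1 \<union> C2))"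
          by (cases "e \<in> E") (use sec_lower[of e] in auto)
      qed
      also have "\<dots> = emeasure T (C1 \<union> C2)" by (rule altT[OF CU_sets, symmetric])
      finally show ?thesis .
    qed
    have up: "emeasure T (C1 \<union> C2) \<le> 2 * emeasure (M \<Otimes>\<^sub>M R) B"
      using emeasure_subadditive[OF C1_sets C2_sets] e1 e2 by (simp add: mult_2)
    have i1: "ennreal (1/2) * emeasure M A \<le> 2 * emeasure (M \<Otimes>\<^sub>M R) B" using order_trans[OF lo up] .
    have i2: "ennreal (1/2) * emeasure M A = ennreal (1/2 * measure M A)"
      by (subst ennreal_mult) (auto simp: M.emeasure_eq_measure)
    have i3: "2 * emeasure (M \<Otimes>\<^sub>M R) B = ennreal (2 * measure (M \<Otimes>\<^sub>M R) B)"
      by (subst ennreal_mult) (auto simp: finite_measure.emeasure_eq_measure[OF MRfin])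
    from i1 have "ennreal (1/2 * measure M A) \<le> ennreal (2 * measure (M \<Otimes>\<^sub>M R) B)" unfolding i2 i3 .
    then have "1/2 * measure M A \<le> 2 * measure (M \<Otimes>\<^sub>M R) B" by (simp add: measure_nonneg)
    then show ?thesis unfolding B_def by simp
  qed
  define Bn where "Bn = (\<lambda>n::nat. Bs (t/4 - 1 / real (Suc n)))"
  have MRp: "prob_space (M \<Otimes>\<^sub>M R)" by (rule MR.prob_space_axioms)
  have MRfin: "finite_measure (M \<Otimes>\<^sub>M R)" using MRp by (simp add: prob_space_def)
  have dec: "decseq Bn"
  proof (rule decseq_SucI)
    fix n
    have "1 / real (Suc (Suc n)) \<le> 1 / real (Suc n)" by (simp add: frac_le)
    then have le: "ereal (t/4 - 1 / real (Suc n)) \<le> ereal (t/4 - 1 / real (Suc (Suc n)))" by simp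
    show "Bn (Suc n) \<subseteq> Bn n" unfolding Bn_def Bs_def using order_trans[OF le] by auto
  qed
  have inter: "(\<Inter>n. Bn n) = Bs (t/4)"
  proof
    show "(\<Inter>n. Bn n) \<subseteq> Bs (t/4)"
    proof
      fix p assume p: "p \<in> (\<Inter>n. Bn n)"
      then have ps: "p \<in> space (M \<Otimes>\<^sub>M R)" by (simp add: Bn_def Bs_def)
      have "\<And>n. ereal (t/4 - 1 / real (Suc n)) \<le> \<Psi> (fst p) (snd p)"
        using p by (simp add: Bn_def Bs_def)
      then have "ereal (t/4) \<le> \<Psi> (fst p) (snd p)" by (rule ereal_thresh)
      then show "p \<in> Bs (t/4)" using ps by (simp add: Bs_def)
    qed
    show "Bs (t/4) \<subseteq> (\<Inter>n. Bn n)"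
    proof
      fix p assume p: "p \<in> Bs (t/4)"
      show "p \<in> (\<Inter>n. Bn n)"
      proof
        fix n
        have le: "ereal (t/4 - 1 / real (Suc n)) \<le> ereal (t/4)" by simp
        show "p \<in> Bn n" using p order_trans[OF le] unfolding Bn_def Bs_def by auto
      qed
    qed
  qed
  have lim: "(\<lambda>n. measure (M \<Otimes>\<^sub>M R) (Bn n)) \<longlonglongrightarrow> measure (M \<Otimes>\<^sub>M R) (Bs (t/4))"
    using finite_measure.finite_Lim_measure_decseq[OF MRfin, of Bn] Bs_sets dec inter
    unfolding Bn_def by auto
  have "measure M A / 4 \<le> measure (M \<Otimes>\<^sub>M R) (Bs (t/4))"
  proof (rule LIMSEQ_le_const[OF lim], intro exI allI impI)
    fix n :: nat
    have "measure M A \<le> 4 * measure (M \<Otimes>\<^sub>M R) (Bs (t/4 - 1 / real (Suc n)))"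
      by (rule key) simp
    then show "measure M A / 4 \<le> measure (M \<Otimes>\<^sub>M R) (Bn n)" unfolding Bn_def by simp
  qed
  then show ?thesis using goal_eq by simp
qed


end
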